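(* Let $G$ be a group (finite or infinite), let $F$ be a field of characteristic zero, and let $\mathfrak{S}$ be an $F$-subspace of the group ring $F[G]$ that is closed under the Hadamard product $\circ$. Then for every $\alpha\in\mathfrak{S}$ and every $c\in F\setminus\{0\}$, the simple quantity $\overline{K(\alpha,c)}$ lies in $\mathfrak{S}$.
   Context: Elements of $F[G]$ are written $\alpha=\sum_{g\in G}\alpha_g g$ with $\alpha_g\in F$, all but finitely many zero. The Hadamard product is $\alpha\circ\beta=\sum_{g\in G}\alpha_g\beta_g g$. For a finite subset $C\subseteq G$, $\overline{C}=\sum_{g\in C} g$ (a simple quantity). For $\alpha\in F[G]$ and $c\in F$, the coefficient complex is $K(\alpha,c)=\{g\in G\mid \alpha_g=c\}$ (finite when $c\neq 0$). *)

theory Defs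
  imports "HOL-Algebra.Group"
begin

text \<open>The group ring F[G] as a set of finitely supported coefficient functions
  on the carrier of G (zero outside the carrier).\<close>
definition group_ring :: "('g, 'm) monoid_scheme \<Rightarrow> ('g \<Rightarrow> 'f::field) set" where
  "group_ring G = {\<alpha>. finite {g. \<alpha> g \<noteq> 0} \<and> (\<forall>g. g \<notin> carrier G \<longrightarrow> \<alpha> g = 0)}"

definition hadamard :: "('g \<Rightarrow> 'f::field) \<Rightarrow> ('g \<Rightarrow> 'f) \<Rightarrow> ('g \<Rightarrow> 'f)" (infixl "\<circ>\<^sub>H" 70) where
  "\<alpha> \<circ>\<^sub>H \<beta> = (\<lambda>g. \<alpha> g * \<beta> g)"

text \<open>Simple quantity of a finite subset C: sum of its elements, i.e. indicator coefficients.\<close>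
definition simple_quantity :: "'g set \<Rightarrow> ('g \<Rightarrow> 'f::field)" where
  "simple_quantity C = (\<lambda>g. if g \<in> C then 1 else 0)"

definition coeff_complex :: "('g, 'm) monoid_scheme \<Rightarrow> ('g \<Rightarrow> 'f::field) \<Rightarrow> 'f \<Rightarrow> 'g set" where
  "coeff_complex G \<alpha> c = {g \<in> carrier G. \<alpha> g = c}"

definition group_ring_subspace :: "('g, 'm) monoid_scheme \<Rightarrow> ('g \<Rightarrow> 'f::field) set \<Rightarrow> bool" where
  "group_ring_subspace G S \<longleftrightarrow> S \<subseteq> group_ring G \<and> (\<lambda>_. 0) \<in> S
     \<and> (\<forall>\<alpha>\<in>S. \<forall>\<beta>\<in>S. (\<lambda>g. \<alpha> g + \<beta> g) \<in> S)
     \<and> (\<forall>a. \<forall>\<alpha>\<in>S. (\<lambda>g. a * \<alpha> g) \<in> S)"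

end

theory Submission
  imports Defs
begin

lemma step_in:
  fixes S :: "('g \<Rightarrow> 'f::field_char_0) set"
  assumes sub: "group_ring_subspace G S"
    and had: "\<forall>\<alpha>\<in>S. \<forall>\<beta>\<in>S. \<alpha> \<circ>\<^sub>H \<beta> \<in> S"
    and a: "\<alpha> \<in> S" and c: "c \<noteq> 0"
  shows "finite W \<Longrightarrow> c \<notin> W \<Longrightarrow> (\<lambda>g. (\<alpha> g / c) * (\<Prod>v\<in>W. (\<alpha> g - v) / (c - v))) \<in> S"
proof (induction W rule: finite_induct)
  case empty
  have "(\<lambda>g. inverse c * \<alpha> g) \<in> S" using sub a unfolding group_ring_subspace_def by blast
  then show ?case by (simp add: field_simps)
next
  case (insert v W)
  have add: "\<And>x y. x\<in>S \<Longrightarrow> y\<in>S \<Longrightarrow> (\<lambda>g. x g + y g) \<in> S"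
    using sub unfolding group_ring_subspace_def by blast
  have smul: "\<And>a x. x\<in>S \<Longrightarrow> (\<lambda>g. a * x g) \<in> S"
    using sub unfolding group_ring_subspace_def by blast
  define \<beta> where "\<beta> = (\<lambda>g. (\<alpha> g / c) * (\<Prod>v\<in>W. (\<alpha> g - v) / (c - v)))"
  have b: "\<beta> \<in> S" using insert unfolding \<beta>_def by simp
  have h: "\<beta> \<circ>\<^sub>H \<alpha> \<in> S" using had a b by blast
  have s1: "(\<lambda>g. (1/(c-v)) * (\<beta> \<circ>\<^sub>H \<alpha>) g) \<in> S" by (rule smul[OF h])
  have s2: "(\<lambda>g. (-v/(c-v)) * \<beta> g) \<in> S" by (rule smul[OF b])
  have s3: "(\<lambda>g. (1/(c-v)) * (\<beta> \<circ>\<^sub>H \<alpha>) g + (-v/(c-v)) * \<beta> g) \<in> S"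
    using add[OF s1 s2] by simp
  have cv: "c - v \<noteq> 0" using insert by auto
  have eq: "(\<lambda>g. (1/(c-v)) * (\<beta> \<circ>\<^sub>H \<alpha>) g + (-v/(c-v)) * \<beta> g)
     = (\<lambda>g. (\<alpha> g / c) * (\<Prod>v\<in>insert v W. (\<alpha> g - v) / (c - v)))"
  proof
    fix g
    show "(1/(c-v)) * (\<beta> \<circ>\<^sub>H \<alpha>) g + (-v/(c-v)) * \<beta> g
       = (\<alpha> g / c) * (\<Prod>v\<in>insert v W. (\<alpha> g - v) / (c - v))"
    proof -
      have p: "(\<Prod>v\<in>insert v W. (\<alpha> g - v) / (c - v)) = (\<alpha> g - v) / (c - v) * (\<Prod>v\<in>W. (\<alpha> g - v) / (c - v))"
        by (rule prod.insert[OF insert(1,2)])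
      have "(1/(c-v)) * (\<beta> \<circ>\<^sub>H \<alpha>) g + (-v/(c-v)) * \<beta> g = \<beta> g * ((\<alpha> g - v) / (c - v))"
        unfolding hadamard_def by (simp add: diff_divide_distrib algebra_simps)
      then show ?thesis unfolding p \<beta>_def by (simp only: mult_ac)
    qed
  qed
  show ?case using s3 eq by simp
qed

theorem lemma2p6:
  fixes G :: "('g, 'm) monoid_scheme" and S :: "('g \<Rightarrow> 'f::field_char_0) set"
  assumes "group G"
    and "group_ring_subspace G S"
    and "\<forall>\<alpha>\<in>S. \<forall>\<beta>\<in>S. \<alpha> \<circ>\<^sub>H \<beta> \<in> S"
    and "\<alpha> \<in> S" and "c \<noteq> 0"
  shows "simple_quantity (coeff_complex G \<alpha> c) \<in> S"
proof -
  have gr: "\<alpha> \<in> group_ring G" using assms(2,4) unfolding group_ring_subspace_def by blast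
  define W where "W = \<alpha> ` {g. \<alpha> g \<noteq> 0} - {c}"
  have fW: "finite W" using gr unfolding W_def group_ring_def by auto
  have cW: "c \<notin> W" unfolding W_def by auto
  have in_S: "(\<lambda>g. (\<alpha> g / c) * (\<Prod>v\<in>W. (\<alpha> g - v) / (c - v))) \<in> S"
    using step_in[OF assms(2,3,4,5) fW cW] .
  have "(\<lambda>g. (\<alpha> g / c) * (\<Prod>v\<in>W. (\<alpha> g - v) / (c - v))) = simple_quantity (coeff_complex G \<alpha> c)"
  proof
    fix g
    show "(\<alpha> g / c) * (\<Prod>v\<in>W. (\<alpha> g - v) / (c - v)) = simple_quantity (coeff_complex G \<alpha> c) g"
    proof (cases "\<alpha> g = c")
      case True
      have "g \<in> carrier G" using gr True assms(5) unfolding group_ring_def by auto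
      moreover have "(\<Prod>v\<in>W. (\<alpha> g - v) / (c - v)) = 1"
        using True cW by (intro prod.neutral) auto
      ultimately show ?thesis using True assms(5)
        unfolding simple_quantity_def coeff_complex_def by simp
    next
      case False
      have z: "\<alpha> g = 0 \<or> \<alpha> g \<in> W" using False unfolding W_def by auto
      have "(\<alpha> g / c) * (\<Prod>v\<in>W. (\<alpha> g - v) / (c - v)) = 0"
      proof (cases "\<alpha> g = 0")
        case False
        then have "\<alpha> g \<in> W" using z by simp
        then have "(\<Prod>v\<in>W. (\<alpha> g - v) / (c - v)) = 0"
          using fW by (intro prod_zero) auto
        then show ?thesis by simp
      qed simp
      then show ?thesis using False unfolding simple_quantity_def coeff_complex_def by simp
    qed
  qed
  then show ?thesis using in_S by simp
qed

end
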